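(* There is an absolute constant $c>0$ such that an $L$-layer log-linear attention model with $H$ heads, dimension $d$ and precision $p$ cannot solve the function evaluation task $\mathsf{Eva}$ on $[n]$ whenever $LHd^2p<cn$. On the other hand, a single-layer full attention Transformer solves $\mathsf{Eva}$ with $Hdp=O(\mathrm{poly}\log n)$. The same lower bound holds for log-linear attention with chain-of-thought.
   Context: Function evaluation $\mathsf{Eva}(f,x)$: the input is a function $f:[n]\to[n]$, given as $n$ tokens encoding $f(1),\dots,f(n)$, followed by one token encoding $x\in[n]$. The required output is $f(x)$. Log-linear attention (layer $\ell$, head $h$): the output at position $i$ is $y^{(\ell,h)}_i=\sum_{r=0}^{R-1}\lambda^{(r,\ell,h)}_iS^{(r,\ell,h)}_iQx^{(\ell-1,h)}_i$, where $R=\lceil\log_2 i+1\rceil+1$. The weights $\lambda^{(r,\ell,h)}_i$ depend only on $x^{(\ell-1,h)}_i$, and the hidden states $S^{(r,\ell,h)}_i\in\mathbb{R}^{d\times d}$ (with $p$-bit entries) are updated by $S^{(r,\ell,h)}_i=f^{(r,\ell,h)}\big((S^{(r',\ell,h)}_{i-1})_{r'\in[0,r-1]},x^{(\ell-1,h)}_i\big)$ for fixed functions $f^{(r,\ell,h)}$. Heads are concatenated, and layers are interleaved with arbitrary position-wise MLP maps. Full attention uses softmax weights $\alpha_{i,j}\propto\exp(\langle Qx_i,Kx_j\rangle)$ over $j\le i$ and output $\sum_{j\le i}\alpha_{i,j}Vx_j$. With chain-of-thought, the model autoregressively generates additional tokens after the input (each appended as a new position), and the answer is read from them. *)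

theory Defs
  imports Complex_Main
begin

(* Vectors in R^d and matrices in R^{d x d} are represented as functions on
   indices, always masked to the coordinates a < d (resp. a, b < d).
   A "stream" at a position is the tuple of per-head vectors x^{(l,h)}_i,
   masked to heads h < H and coordinates a < d. Positions are 1-indexed. *)

type_synonym vec = "nat \<Rightarrow> real"
type_synonym mat = "nat \<Rightarrow> nat \<Rightarrow> real"
type_synonym strm = "nat \<Rightarrow> vec"

definition mvec :: "nat \<Rightarrow> mat \<Rightarrow> vec \<Rightarrow> vec" where
  "mvec d A v = (\<lambda>a. if a < d then (\<Sum>b<d. A a b * v b) else 0)"

definition mmask :: "nat \<Rightarrow> mat \<Rightarrow> mat" where
  "mmask d A = (\<lambda>a b. if a < d \<and> b < d then A a b else 0)"

definition smask :: "nat \<Rightarrow> nat \<Rightarrow> strm \<Rightarrow> strm" where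
  "smask H d X = (\<lambda>h a. if h < H \<and> a < d then X h a else 0)"

definition nstates :: "nat \<Rightarrow> nat" where
  "nstates i = nat \<lceil>log 2 (real i) + 1\<rceil> + 1"

definition is_fun :: "nat \<Rightarrow> (nat \<Rightarrow> nat) \<Rightarrow> bool" where
  "is_fun n f \<longleftrightarrow> (\<forall>i\<in>{1..n}. f i \<in> {1..n})"

definition eva_tokens :: "nat \<Rightarrow> (nat \<Rightarrow> nat) \<Rightarrow> nat \<Rightarrow> nat \<Rightarrow> nat" where
  "eva_tokens n f x = (\<lambda>i. if 1 \<le> i \<and> i \<le> n then f i else if i = n + 1 then x else 0)"

record loglin_model =
  ll_emb :: "nat \<Rightarrow> nat \<Rightarrow> strm"                       (* token, position *)
  ll_lam :: "nat \<Rightarrow> nat \<Rightarrow> nat \<Rightarrow> vec \<Rightarrow> real"             (* r, layer, head, x_i *)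
  ll_upd :: "nat \<Rightarrow> nat \<Rightarrow> nat \<Rightarrow> (nat \<Rightarrow> mat) \<Rightarrow> vec \<Rightarrow> mat"
  ll_Q   :: "nat \<Rightarrow> nat \<Rightarrow> mat"                        (* layer, head *)
  ll_mlp :: "nat \<Rightarrow> strm \<Rightarrow> strm \<Rightarrow> strm"               (* layer, head outputs, previous stream *)
  ll_out :: "strm \<Rightarrow> nat"

(* hidden states S^(r)_i of one head; S_0 = 0 (empty prefix);
   f^(r) only sees (S^(r')_{i-1})_{r' < r} and x_i *)
fun ll_state :: "nat \<Rightarrow> (nat \<Rightarrow> (nat \<Rightarrow> mat) \<Rightarrow> vec \<Rightarrow> mat) \<Rightarrow> (nat \<Rightarrow> vec) \<Rightarrow> nat \<Rightarrow> nat \<Rightarrow> mat" where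
  "ll_state d F xs 0 = (\<lambda>r a b. 0)"
| "ll_state d F xs (Suc i) =
     (\<lambda>r. mmask d (F r (\<lambda>r'. if r' < r then ll_state d F xs i r' else (\<lambda>a b. 0)) (xs (Suc i))))"

definition ll_head :: "nat \<Rightarrow> (nat \<Rightarrow> vec \<Rightarrow> real) \<Rightarrow> (nat \<Rightarrow> (nat \<Rightarrow> mat) \<Rightarrow> vec \<Rightarrow> mat)
    \<Rightarrow> mat \<Rightarrow> (nat \<Rightarrow> vec) \<Rightarrow> nat \<Rightarrow> vec" where
  "ll_head d lam F Q xs i =
     (\<lambda>a. \<Sum>r<nstates i. lam r (xs i) * mvec d (ll_state d F xs i r) (mvec d Q (xs i)) a)"

fun ll_stream :: "nat \<Rightarrow> nat \<Rightarrow> loglin_model \<Rightarrow> (nat \<Rightarrow> nat) \<Rightarrow> nat \<Rightarrow> nat \<Rightarrow> strm" where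
  "ll_stream H d M toks 0 = (\<lambda>i. smask H d (ll_emb M (toks i) i))"
| "ll_stream H d M toks (Suc l) =
     (let X = ll_stream H d M toks l in
      (\<lambda>i. smask H d (ll_mlp M l
              (\<lambda>h. if h < H then ll_head d (\<lambda>r. ll_lam M r l h) (\<lambda>r. ll_upd M r l h) (ll_Q M l h)
                                        (\<lambda>j. X j h) i
                   else (\<lambda>a. 0))
              (X i))))"

definition ll_run :: "nat \<Rightarrow> nat \<Rightarrow> nat \<Rightarrow> loglin_model \<Rightarrow> (nat \<Rightarrow> nat) \<Rightarrow> nat \<Rightarrow> nat" where
  "ll_run L H d M toks i = ll_out M (ll_stream H d M toks L i)"

definition ll_precision :: "nat \<Rightarrow> nat \<Rightarrow> nat \<Rightarrow> nat \<Rightarrow> loglin_model \<Rightarrow> bool" where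
  "ll_precision L H d p M \<longleftrightarrow>
     (\<exists>P :: real set. finite P \<and> card P \<le> 2 ^ p \<and>
        (\<forall>r l h S v a b. l < L \<and> h < H \<and> a < d \<and> b < d \<longrightarrow> ll_upd M r l h S v a b \<in> P))"

definition ll_solves :: "nat \<Rightarrow> nat \<Rightarrow> nat \<Rightarrow> nat \<Rightarrow> nat \<Rightarrow> loglin_model \<Rightarrow> bool" where
  "ll_solves n L H d p M \<longleftrightarrow> ll_precision L H d p M \<and>
     (\<forall>f x. is_fun n f \<and> x \<in> {1..n} \<longrightarrow> ll_run L H d M (eva_tokens n f x) (n + 1) = f x)"

(* chain of thought: token sequence after k generated tokens (input of length m) *)
fun ll_cot :: "nat \<Rightarrow> nat \<Rightarrow> nat \<Rightarrow> loglin_model \<Rightarrow> (nat \<Rightarrow> nat) \<Rightarrow> nat \<Rightarrow> nat \<Rightarrow> nat \<Rightarrow> nat" where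
  "ll_cot L H d M t0 m 0 = t0"
| "ll_cot L H d M t0 m (Suc k) =
     (let t = ll_cot L H d M t0 m k in t(m + Suc k := ll_run L H d M t (m + k)))"

definition ll_cot_tokens :: "nat \<Rightarrow> nat \<Rightarrow> nat \<Rightarrow> loglin_model \<Rightarrow> nat \<Rightarrow> nat \<Rightarrow> (nat \<Rightarrow> nat) \<Rightarrow> nat \<Rightarrow> nat list" where
  "ll_cot_tokens L H d M n T f x =
     map (ll_cot L H d M (eva_tokens n f x) (n + 1) T) [n + 2..<n + 2 + T]"

definition ll_solves_cot :: "nat \<Rightarrow> nat \<Rightarrow> nat \<Rightarrow> nat \<Rightarrow> nat \<Rightarrow> loglin_model \<Rightarrow> bool" where
  "ll_solves_cot n L H d p M \<longleftrightarrow> ll_precision L H d p M \<and>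
     (\<exists>T (dec :: nat list \<Rightarrow> nat). \<forall>f x. is_fun n f \<and> x \<in> {1..n} \<longrightarrow>
         dec (ll_cot_tokens L H d M n T f x) = f x)"

record fullatt_model =
  fa_emb :: "nat \<Rightarrow> nat \<Rightarrow> strm"
  fa_Q   :: "nat \<Rightarrow> nat \<Rightarrow> mat"
  fa_K   :: "nat \<Rightarrow> nat \<Rightarrow> mat"
  fa_V   :: "nat \<Rightarrow> nat \<Rightarrow> mat"
  fa_mlp :: "nat \<Rightarrow> strm \<Rightarrow> strm \<Rightarrow> strm"
  fa_out :: "strm \<Rightarrow> nat"

definition rnd :: "real set \<Rightarrow> real \<Rightarrow> real" where
  "rnd P t = (SOME q. q \<in> P \<and> (\<forall>q'\<in>P. \<bar>t - q\<bar> \<le> \<bar>t - q'\<bar>))"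

definition fa_head :: "real set \<Rightarrow> nat \<Rightarrow> mat \<Rightarrow> mat \<Rightarrow> mat \<Rightarrow> (nat \<Rightarrow> vec) \<Rightarrow> nat \<Rightarrow> vec" where
  "fa_head P d Q K V xs i =
     (let q = mvec d Q (xs i);
          s = (\<lambda>j. \<Sum>a<d. q a * mvec d K (xs j) a);
          Z = (\<Sum>j\<in>{1..i}. exp (s j))
      in (\<lambda>a. if a < d then rnd P (\<Sum>j\<in>{1..i}. exp (s j) / Z * mvec d V (xs j) a) else 0))"

fun fa_stream :: "real set \<Rightarrow> nat \<Rightarrow> nat \<Rightarrow> fullatt_model \<Rightarrow> (nat \<Rightarrow> nat) \<Rightarrow> nat \<Rightarrow> nat \<Rightarrow> strm" where
  "fa_stream P H d M toks 0 = (\<lambda>i. smask H d (fa_emb M (toks i) i))"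
| "fa_stream P H d M toks (Suc l) =
     (let X = fa_stream P H d M toks l in
      (\<lambda>i. smask H d (fa_mlp M l
              (\<lambda>h. if h < H then fa_head P d (fa_Q M l h) (fa_K M l h) (fa_V M l h) (\<lambda>j. X j h) i
                   else (\<lambda>a. 0))
              (X i))))"

definition fa_run :: "real set \<Rightarrow> nat \<Rightarrow> nat \<Rightarrow> nat \<Rightarrow> fullatt_model \<Rightarrow> (nat \<Rightarrow> nat) \<Rightarrow> nat \<Rightarrow> nat" where
  "fa_run P L H d M toks i = fa_out M (fa_stream P H d M toks L i)"

definition fa_precision :: "real set \<Rightarrow> nat \<Rightarrow> nat \<Rightarrow> nat \<Rightarrow> nat \<Rightarrow> fullatt_model \<Rightarrow> bool" where
  "fa_precision P L H d p M \<longleftrightarrow> finite P \<and> P \<noteq> {} \<and> card P \<le> 2 ^ p \<and>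
     (\<forall>t i h a. h < H \<and> a < d \<longrightarrow> fa_emb M t i h a \<in> P) \<and>
     (\<forall>l h a b. l < L \<and> h < H \<and> a < d \<and> b < d \<longrightarrow>
         fa_Q M l h a b \<in> P \<and> fa_K M l h a b \<in> P \<and> fa_V M l h a b \<in> P) \<and>
     (\<forall>l Y X h a. l < L \<and> h < H \<and> a < d \<longrightarrow> fa_mlp M l Y X h a \<in> P)"

definition fa_solves :: "nat \<Rightarrow> nat \<Rightarrow> nat \<Rightarrow> nat \<Rightarrow> nat \<Rightarrow> real set \<Rightarrow> fullatt_model \<Rightarrow> bool" where
  "fa_solves n L H d p P M \<longleftrightarrow> fa_precision P L H d p M \<and>
     (\<forall>f x. is_fun n f \<and> x \<in> {1..n} \<longrightarrow> fa_run P L H d M (eva_tokens n f x) (n + 1) = f x)"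

end

theory Submission
  imports Defs "HOL-Library.FuncSet"
begin


lemma state_prefix:
  "(\<And>j. j \<le> i \<Longrightarrow> xs1 j = xs2 j) \<Longrightarrow> ll_state d F xs1 i = ll_state d F xs2 i"
proof (induction i)
  case 0 then show ?case by simp
next
  case (Suc i)
  then have a: "ll_state d F xs1 i = ll_state d F xs2 i" by simp
  have b: "xs1 (Suc i) = xs2 (Suc i)" using Suc.prems by simp
  show ?case unfolding ll_state.simps a b ..
qed

lemma stream_prefix:
  assumes "\<And>j. j \<le> n \<Longrightarrow> t1 j = t2 j"
  shows "i \<le> n \<Longrightarrow> ll_stream H d M t1 l i = ll_stream H d M t2 l i"
proof (induction l arbitrary: i)
  case 0 then show ?case using assms by simp
next
  case (Suc l)
  have X: "\<And>j. j \<le> i \<Longrightarrow> ll_stream H d M t1 l j = ll_stream H d M t2 l j"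
    using Suc by simp
  have S: "\<And>F h. ll_state d F (\<lambda>j. ll_stream H d M t1 l j h) i = ll_state d F (\<lambda>j. ll_stream H d M t2 l j h) i"
    by (rule state_prefix) (simp add: X)
  have Y: "ll_stream H d M t1 l i = ll_stream H d M t2 l i" using X by simp
  show ?case unfolding ll_stream.simps Let_def ll_head_def S Y
    using X by (metis order_refl)
qed

lemma state_suffix:
  assumes "\<And>j. j > n \<Longrightarrow> xs1 j = xs2 j"
    and "\<And>r. r < K \<Longrightarrow> ll_state d F xs1 n r = ll_state d F xs2 n r"
  shows "r < K + k \<Longrightarrow> ll_state d F xs1 (n + k) r = ll_state d F xs2 (n + k) r"
proof (induction k arbitrary: r)
  case 0 then show ?case using assms(2) by simp
next
  case (Suc k)
  have e: "(\<lambda>r'. if r' < r then ll_state d F xs1 (n + k) r' else (\<lambda>a b. 0)) =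
           (\<lambda>r'. if r' < r then ll_state d F xs2 (n + k) r' else (\<lambda>a b. 0))"
    using Suc by (auto intro!: ext)
  have "xs1 (Suc (n + k)) = xs2 (Suc (n + k))" using assms(1) by simp
  then show ?case using e by simp
qed

lemma nstates_Suc: "m \<ge> 1 \<Longrightarrow> nstates (Suc m) \<le> nstates m + 1"
proof -
  assume m: "m \<ge> 1"
  have "log 2 (real (Suc m)) \<le> log 2 (2 * real m)" using m by simp
  also have "\<dots> = 1 + log 2 (real m)" using m by (simp add: log_mult)
  finally have "\<lceil>log 2 (real (Suc m)) + 1\<rceil> \<le> \<lceil>log 2 (real m) + 1\<rceil> + 1"
    by (metis add.commute ceiling_add_one ceiling_mono add_le_cancel_right)
  moreover have "log 2 (real m) \<ge> 0" using m by simp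
  then have "\<lceil>log 2 (real m) + 1\<rceil> \<ge> 1" by linarith
  ultimately show ?thesis unfolding nstates_def by linarith
qed

lemma nstates_le: "n \<ge> 1 \<Longrightarrow> nstates (n + 1 + k) \<le> nstates (n + 1) + k"
proof (induction k)
  case 0 then show ?case by simp
next
  case (Suc k)
  then show ?case using nstates_Suc[of "n + 1 + k"] by simp
qed

definition st :: "loglin_model \<Rightarrow> nat \<Rightarrow> nat \<Rightarrow> (nat \<Rightarrow> nat) \<Rightarrow> nat \<Rightarrow> nat \<Rightarrow> nat \<Rightarrow> nat \<Rightarrow> mat" where
  "st M H d t l h n r = ll_state d (\<lambda>r. ll_upd M r l h) (\<lambda>j. ll_stream H d M t l j h) n r"

lemma st_prefix:
  assumes "\<And>j. j \<le> n \<Longrightarrow> t1 j = t2 j"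
  shows "st M H d t1 l h n = st M H d t2 l h n"
  unfolding st_def
  by (rule arg_cong[where f="\<lambda>g. g"], rule state_prefix, simp add: stream_prefix[OF assms])

lemma stream_suffix:
  assumes n: "n \<ge> 1"
    and t: "\<And>j. j > n \<Longrightarrow> t1 j = t2 j"
    and E: "\<And>l h r a b. l < L \<Longrightarrow> h < H \<Longrightarrow> r < nstates (n + 1) \<Longrightarrow> a < d \<Longrightarrow> b < d \<Longrightarrow>
              st M H d t1 l h n r a b = st M H d t2 l h n r a b"
  shows "l \<le> L \<Longrightarrow> i > n \<Longrightarrow> ll_stream H d M t1 l i = ll_stream H d M t2 l i"
proof (induction l arbitrary: i)
  case 0 then show ?case using t by simp
next
  case (Suc l)
  have X: "\<And>j. j > n \<Longrightarrow> ll_stream H d M t1 l j = ll_stream H d M t2 l j"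
    using Suc by simp
  obtain n' where n': "n = Suc n'" using n by (cases n) auto
  have S0: "ll_state d (\<lambda>r. ll_upd M r l h) (\<lambda>j. ll_stream H d M t1 l j h) n r
          = ll_state d (\<lambda>r. ll_upd M r l h) (\<lambda>j. ll_stream H d M t2 l j h) n r"
    if "h < H" "r < nstates (n + 1)" for h r
  proof (intro ext)
    fix a b
    show "ll_state d (\<lambda>r. ll_upd M r l h) (\<lambda>j. ll_stream H d M t1 l j h) n r a b
          = ll_state d (\<lambda>r. ll_upd M r l h) (\<lambda>j. ll_stream H d M t2 l j h) n r a b"
    proof (cases "a < d \<and> b < d")
      case True
      then show ?thesis using E[of l h r a b] Suc.prems that unfolding st_def by simp
    next
      case False
      then show ?thesis unfolding n' using False by (auto simp add: mmask_def)
    qed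
  qed
  have S: "ll_state d (\<lambda>r. ll_upd M r l h) (\<lambda>j. ll_stream H d M t1 l j h) i r
          = ll_state d (\<lambda>r. ll_upd M r l h) (\<lambda>j. ll_stream H d M t2 l j h) i r"
    if "h < H" "r < nstates i" for h r
  proof -
    have "nstates i = nstates (n + 1 + (i - n - 1))" using Suc.prems by simp
    also have "\<dots> \<le> nstates (n + 1) + (i - n - 1)" using nstates_le n by blast
    finally have "r < nstates (n + 1) + (i - n)" using that Suc.prems by simp
    from state_suffix[of n "\<lambda>j. ll_stream H d M t1 l j h" "\<lambda>j. ll_stream H d M t2 l j h"
        "nstates (n + 1)" d "\<lambda>r. ll_upd M r l h", OF _ _ this]
    show ?thesis using X S0 that Suc.prems by simp
  qed
  have Y: "ll_stream H d M t1 l i = ll_stream H d M t2 l i" using X Suc.prems by simp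
  have HD: "ll_head d (\<lambda>r. ll_lam M r l h) (\<lambda>r. ll_upd M r l h) (ll_Q M l h) (\<lambda>j. ll_stream H d M t1 l j h) i
          = ll_head d (\<lambda>r. ll_lam M r l h) (\<lambda>r. ll_upd M r l h) (ll_Q M l h) (\<lambda>j. ll_stream H d M t2 l j h) i"
    if "h < H" for h
    unfolding ll_head_def using S[OF that] Y by (intro ext sum.cong) auto
  show ?case unfolding ll_stream.simps Let_def Y
    by (rule arg_cong[where f="smask H d"], rule arg_cong[where f="\<lambda>Y. ll_mlp M l Y _"]) (auto simp: HD)
qed



lemma cot_prefix: "j \<le> m \<Longrightarrow> ll_cot L H d M t0 m k j = t0 j"
  by (induction k) (auto simp: Let_def)

lemma cot_suffix:
  assumes n: "n \<ge> 1"
    and t: "\<And>j. j > n \<Longrightarrow> t1 j = t2 j"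
    and E: "\<And>l h r a b. l < L \<Longrightarrow> h < H \<Longrightarrow> r < nstates (n + 1) \<Longrightarrow> a < d \<Longrightarrow> b < d \<Longrightarrow>
              st M H d t1 l h n r a b = st M H d t2 l h n r a b"
  shows "i > n \<Longrightarrow> ll_cot L H d M t1 (n + 1) k i = ll_cot L H d M t2 (n + 1) k i"
proof (induction k arbitrary: i)
  case 0 then show ?case using t by simp
next
  case (Suc k)
  let ?c1 = "ll_cot L H d M t1 (n + 1) k" and ?c2 = "ll_cot L H d M t2 (n + 1) k"
  have p1: "st M H d ?c1 l h n = st M H d t1 l h n" for l h
    by (rule st_prefix) (simp add: cot_prefix)
  have p2: "st M H d ?c2 l h n = st M H d t2 l h n" for l h
    by (rule st_prefix) (simp add: cot_prefix)
  have "ll_stream H d M ?c1 L (n + 1 + k) = ll_stream H d M ?c2 L (n + 1 + k)"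
    apply (rule stream_suffix[OF n, where L=L])
    using Suc.IH apply simp
    using E p1 p2 apply simp
    apply simp
    apply simp
    done
  then have "ll_run L H d M ?c1 (n + 1 + k) = ll_run L H d M ?c2 (n + 1 + k)"
    by (simp add: ll_run_def)
  then show ?case using Suc by (simp add: Let_def)
qed

lemma eva_prefix: "j \<le> n \<Longrightarrow> eva_tokens n f x j = eva_tokens n f y j"
  by (simp add: eva_tokens_def)

lemma eva_suffix: "j > n \<Longrightarrow> eva_tokens n f x j = eva_tokens n g x j"
  by (simp add: eva_tokens_def)


lemma counting:
  assumes n: "n \<ge> 1" and prec: "ll_precision L H d p M"
    and Det: "\<And>f g x. is_fun n f \<Longrightarrow> is_fun n g \<Longrightarrow> x \<in> {1..n} \<Longrightarrow>
       (\<And>l h r a b. l < L \<Longrightarrow> h < H \<Longrightarrow> r < nstates (n + 1) \<Longrightarrow> a < d \<Longrightarrow> b < d \<Longrightarrow>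
              st M H d (eva_tokens n f x) l h n r a b = st M H d (eva_tokens n g x) l h n r a b)
        \<Longrightarrow> f x = g x"
  shows "n ^ n \<le> (2::nat) ^ (p * (L * H * nstates (n + 1) * d * d))"
proof -
  obtain P :: "real set" where P: "finite P" "card P \<le> 2 ^ p"
    and PP0: "\<forall>r l h S v a b. l < L \<and> h < H \<and> a < d \<and> b < d \<longrightarrow> ll_upd M r l h S v a b \<in> P"
    using prec unfolding ll_precision_def by auto
  have PP: "\<And>r l h S v a b. l < L \<Longrightarrow> h < H \<Longrightarrow> a < d \<Longrightarrow> b < d \<Longrightarrow> ll_upd M r l h S v a b \<in> P"
    using PP0 by blast
  define K where "K = nstates (n + 1)"
  define A where "A = {..<L} \<times> {..<H} \<times> {..<K} \<times> {..<d} \<times> {..<d}"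
  define FS where "FS = PiE {1..n} (\<lambda>_. {1..n::nat})"
  define \<Phi> where "\<Phi> f = restrict (\<lambda>(l,h,r,a,b). st M H d (eva_tokens n f 1) l h n r a b) A" for f
  obtain n' where n': "n = Suc n'" using n by (cases n) auto
  have isf: "is_fun n f" if "f \<in> FS" for f using that unfolding FS_def is_fun_def by auto
  have stx: "st M H d (eva_tokens n f x) l h n = st M H d (eva_tokens n f 1) l h n" for f x l h
    by (rule st_prefix) (simp add: eva_tokens_def)
  have inj: "inj_on \<Phi> FS"
  proof (rule inj_onI)
    fix f g assume f: "f \<in> FS" and g: "g \<in> FS" and e: "\<Phi> f = \<Phi> g"
    show "f = g"
    proof (rule PiE_ext[OF f[unfolded FS_def] g[unfolded FS_def]])
      fix x assume x: "x \<in> {1..n}"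
      show "f x = g x"
      proof (rule Det[OF isf[OF f] isf[OF g] x])
        fix l h r a b assume "l < L" "h < H" "r < nstates (n + 1)" "a < d" "b < d"
        then have "(l,h,r,a,b) \<in> A" unfolding A_def K_def by auto
        then have "\<Phi> f (l,h,r,a,b) = \<Phi> g (l,h,r,a,b)" using e by simp
        then show "st M H d (eva_tokens n f x) l h n r a b = st M H d (eva_tokens n g x) l h n r a b"
          using \<open>(l,h,r,a,b) \<in> A\<close> stx[of f x l h] stx[of g x l h] unfolding \<Phi>_def by simp
      qed
    qed
  qed
  have img: "\<Phi> ` FS \<subseteq> PiE A (\<lambda>_. P)"
  proof
    fix y assume "y \<in> \<Phi> ` FS"
    then obtain f where y: "y = \<Phi> f" by blast
    show "y \<in> PiE A (\<lambda>_. P)" unfolding y \<Phi>_def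
    proof (rule restrict_PiE_iff[THEN iffD2], intro ballI)
      fix z assume "z \<in> A"
      then obtain l h r a b where z: "z = (l,h,r,a,b)" "l < L" "h < H" "a < d" "b < d"
        unfolding A_def by auto
      show "(case z of (l, h, r, a, b) \<Rightarrow> st M H d (eva_tokens n f 1) l h n r a b) \<in> P"
        using z PP[OF z(2,3,4,5)] unfolding st_def n' by (simp add: mmask_def)
    qed
  qed
  have "card FS \<le> card (PiE A (\<lambda>_. P))"
    by (rule card_inj_on_le[OF inj img]) (simp add: A_def P(1) finite_PiE)
  moreover have "card FS = n ^ n" unfolding FS_def by (simp add: card_PiE)
  moreover have "card (PiE A (\<lambda>_. P)) = card P ^ card A"
    by (subst card_PiE) (simp_all add: A_def)
  moreover have "card A = L * H * K * d * d" unfolding A_def by (simp add: card_cartesian_product)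
  moreover have "card P ^ card A \<le> (2 ^ p) ^ card A" using P(2) by (rule power_mono) simp
  ultimately show ?thesis unfolding K_def by (simp add: power_mult)
qed



lemma arith_contra:
  fixes n N :: nat
  assumes N: "N \<ge> 1" and lt: "real N < 1/8 * real n"
    and le: "n ^ n \<le> (2::nat) ^ (N * nstates (n + 1))"
  shows False
proof -
  define K where "K = nstates (n + 1)"
  have n8: "n \<ge> 8" using N lt by linarith
  have l3: "log 2 (real n) \<ge> 3"
  proof -
    have "log 2 (real n) \<ge> log 2 8" using n8 by simp
    moreover have "log 2 (8::real) = 3"
    proof -
      have "real (3::nat) = log 2 (real (8::nat))" by (rule log2_of_power_eq) simp
      then show ?thesis by simp
    qed
    ultimately show ?thesis by simp
  qed
  have "real (n ^ n) \<le> real ((2::nat) ^ (N * K))" using le unfolding K_def by (simp only: of_nat_le_iff)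
  then have "real n ^ n \<le> 2 ^ (N * K)" by simp
  then have "log 2 (real n ^ n) \<le> log 2 (2 ^ (N * K))" using n8 by (subst log_le_cancel_iff) auto
  then have A: "real n * log 2 (real n) \<le> real N * real K" using n8 by (simp add: log_nat_power)
  have lk: "log 2 (real (n + 1)) \<le> log 2 (real n) + 1"
  proof -
    have "log 2 (real (n + 1)) \<le> log 2 (2 * real n)" using n8 by simp
    also have "\<dots> = 1 + log 2 (real n)" using n8 by (simp add: log_mult)
    finally show ?thesis by simp
  qed
  have "log 2 (real (n + 1)) \<ge> 0" by simp
  then have "real K \<le> log 2 (real (n + 1)) + 3" unfolding K_def nstates_def by linarith
  then have K: "real K \<le> log 2 (real n) + 4" using lk by linarith
  have Kpos: "real K > 0" unfolding K_def nstates_def by simp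
  have "real N * real K < 1/8 * real n * real K" using lt Kpos by (rule mult_strict_right_mono)
  also have "\<dots> \<le> 1/8 * real n * (log 2 (real n) + 4)" using K by (intro mult_left_mono) auto
  also have "\<dots> \<le> real n * log 2 (real n)"
  proof -
    have "log 2 (real n) + 4 \<le> 8 * log 2 (real n)" using l3 by linarith
    then have "1/8 * real n * (log 2 (real n) + 4) \<le> 1/8 * real n * (8 * log 2 (real n))"
      by (rule mult_left_mono) simp
    then show ?thesis by simp
  qed
  finally show False using A by linarith
qed



lemma lower:
  assumes L: "L \<ge> 1" and H: "H \<ge> 1" and d: "d \<ge> 1" and p: "p \<ge> 1"
    and lt: "real (L * H * d\<^sup>2 * p) < 1/8 * real n"
  shows "\<not> ll_solves n L H d p M \<and> \<not> ll_solves_cot n L H d p M"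
proof -
  define N where "N = L * H * d\<^sup>2 * p"
  have N1: "N \<ge> 1" unfolding N_def using L H d p by simp
  have ltN: "real N < 1/8 * real n" using lt unfolding N_def .
  have n1: "n \<ge> 1" using N1 ltN by linarith
  have eqe: "p * (L * H * nstates (n + 1) * d * d) = N * nstates (n + 1)"
    unfolding N_def power2_eq_square by (simp add: ac_simps)
  have contra: False if prec: "ll_precision L H d p M"
    and Det: "\<And>f g x. is_fun n f \<Longrightarrow> is_fun n g \<Longrightarrow> x \<in> {1..n} \<Longrightarrow>
       (\<And>l h r a b. l < L \<Longrightarrow> h < H \<Longrightarrow> r < nstates (n + 1) \<Longrightarrow> a < d \<Longrightarrow> b < d \<Longrightarrow>
              st M H d (eva_tokens n f x) l h n r a b = st M H d (eva_tokens n g x) l h n r a b)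
        \<Longrightarrow> f x = g x"
  proof -
    have "n ^ n \<le> (2::nat) ^ (p * (L * H * nstates (n + 1) * d * d))"
    proof (rule counting[OF n1 prec])
      fix f g x assume a: "is_fun n f" "is_fun n g" "x \<in> {1..n}"
        and e: "\<And>l h r a b. l < L \<Longrightarrow> h < H \<Longrightarrow> r < nstates (n + 1) \<Longrightarrow> a < d \<Longrightarrow> b < d \<Longrightarrow>
              st M H d (eva_tokens n f x) l h n r a b = st M H d (eva_tokens n g x) l h n r a b"
      show "f x = g x" by (rule Det[OF a e])
    qed
    then show False using arith_contra[OF N1 ltN] unfolding eqe by blast
  qed
  have s1: "\<not> ll_solves n L H d p M"
  proof
    assume S: "ll_solves n L H d p M"
    then have prec: "ll_precision L H d p M" unfolding ll_solves_def by blast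
    have run: "\<And>f x. is_fun n f \<Longrightarrow> x \<in> {1..n} \<Longrightarrow> ll_run L H d M (eva_tokens n f x) (n + 1) = f x"
      using S unfolding ll_solves_def by blast
    show False
    proof (rule contra[OF prec])
      fix f g x
      assume f: "is_fun n f" and g: "is_fun n g" and x: "x \<in> {1..n}"
        and E: "\<And>l h r a b. l < L \<Longrightarrow> h < H \<Longrightarrow> r < nstates (n + 1) \<Longrightarrow> a < d \<Longrightarrow> b < d \<Longrightarrow>
              st M H d (eva_tokens n f x) l h n r a b = st M H d (eva_tokens n g x) l h n r a b"
      have "ll_stream H d M (eva_tokens n f x) L (n + 1) = ll_stream H d M (eva_tokens n g x) L (n + 1)"
        apply (rule stream_suffix[OF n1, where L=L])
           apply (simp add: eva_tokens_def)
          apply (rule E; assumption)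
         apply simp_all
        done
      then have "ll_run L H d M (eva_tokens n f x) (n + 1) = ll_run L H d M (eva_tokens n g x) (n + 1)"
        by (simp add: ll_run_def)
      then show "f x = g x" using run[OF f x] run[OF g x] by simp
    qed
  qed
  have s2: "\<not> ll_solves_cot n L H d p M"
  proof
    assume S: "ll_solves_cot n L H d p M"
    then have prec: "ll_precision L H d p M" unfolding ll_solves_cot_def by blast
    obtain T dec where run: "\<And>f x. is_fun n f \<and> x \<in> {1..n} \<Longrightarrow> dec (ll_cot_tokens L H d M n T f x) = f x"
      using S unfolding ll_solves_cot_def by blast
    show False
    proof (rule contra[OF prec])
      fix f g x
      assume f: "is_fun n f" and g: "is_fun n g" and x: "x \<in> {1..n}"
        and E: "\<And>l h r a b. l < L \<Longrightarrow> h < H \<Longrightarrow> r < nstates (n + 1) \<Longrightarrow> a < d \<Longrightarrow> b < d \<Longrightarrow>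
              st M H d (eva_tokens n f x) l h n r a b = st M H d (eva_tokens n g x) l h n r a b"
      have eq: "ll_cot L H d M (eva_tokens n f x) (n + 1) T i = ll_cot L H d M (eva_tokens n g x) (n + 1) T i"
        if "i > n" for i
        apply (rule cot_suffix[OF n1, where L=L])
          apply (simp add: eva_tokens_def)
         apply (rule E; assumption)
        apply (rule that)
        done
      have "ll_cot_tokens L H d M n T f x = ll_cot_tokens L H d M n T g x"
        unfolding ll_cot_tokens_def
        apply (rule map_cong[OF refl])
        apply (rule eq)
        apply auto
        done
      then show "f x = g x" using run[of f x] run[of g x] f g x by simp
    qed
  qed
  show ?thesis using s1 s2 by blast
qed



lemma rnd_int:
  fixes S :: "int set"
  assumes S: "finite S" and b: "b \<in> S" and t: "\<bar>t - real_of_int b\<bar> < 1/2"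
  shows "rnd (real_of_int ` S) t = real_of_int b"
proof -
  let ?P = "real_of_int ` S"
  let ?g = "\<lambda>q. \<bar>t - q\<bar>"
  have fin: "finite (?g ` ?P)" using S by simp
  have ne: "?g ` ?P \<noteq> {}" using b by auto
  have "Min (?g ` ?P) \<in> ?g ` ?P" using Min_in[OF fin ne] .
  then obtain q0 where q0: "q0 \<in> ?P" "?g q0 = Min (?g ` ?P)" by (metis (no_types, lifting) imageE)
  have ex: "\<exists>q. q \<in> ?P \<and> (\<forall>q'\<in>?P. \<bar>t - q\<bar> \<le> \<bar>t - q'\<bar>)"
    using q0 Min_le[OF fin] by (intro exI[of _ q0]) auto
  define q1 where "q1 = rnd ?P t"
  have q1: "q1 \<in> ?P" "\<forall>q'\<in>?P. \<bar>t - q1\<bar> \<le> \<bar>t - q'\<bar>"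
    using someI_ex[OF ex] unfolding q1_def rnd_def by blast+
  obtain a where a: "q1 = real_of_int a" using q1(1) by auto
  have "\<bar>t - q1\<bar> < 1/2" using q1(2) b t by force
  then have "\<bar>real_of_int a - real_of_int b\<bar> < 1" using t a by linarith
  then have "\<bar>a - b\<bar> < 1" by linarith
  then have "a = b" by linarith
  then show ?thesis using a unfolding q1_def by simp
qed

lemma softmax_pick:
  fixes s v :: "nat \<Rightarrow> real"
  assumes S: "finite S" and x: "x \<in> S"
    and sep: "\<And>j. j \<in> S \<Longrightarrow> j \<noteq> x \<Longrightarrow> s j \<le> s x - \<beta>"
    and W: "\<And>j. j \<in> S \<Longrightarrow> \<bar>v j - v x\<bar> \<le> W"
    and small: "real (card S) * W * exp (- \<beta>) < 1/2"
  shows "\<bar>(\<Sum>j\<in>S. exp (s j) / (\<Sum>i\<in>S. exp (s i)) * v j) - v x\<bar> < 1/2"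
proof -
  define Z where "Z = (\<Sum>i\<in>S. exp (s i))"
  have Zx: "Z \<ge> exp (s x)" unfolding Z_def
    using S x by (intro member_le_sum) auto
  have Zp: "Z > 0" using Zx by (metis exp_gt_zero order_less_le_trans)
  have sum1: "(\<Sum>j\<in>S. exp (s j) / Z) = 1" using Zp unfolding Z_def by (simp add: sum_divide_distrib[symmetric])
  have W0: "W \<ge> 0" using W[OF x] by simp
  have "(\<Sum>j\<in>S. exp (s j) / Z * v j) - v x = (\<Sum>j\<in>S. exp (s j) / Z * v j) - (\<Sum>j\<in>S. exp (s j) / Z) * v x"
    using sum1 by simp
  also have "\<dots> = (\<Sum>j\<in>S. exp (s j) / Z * (v j - v x))"
    by (simp add: sum_distrib_right sum_subtractf right_diff_distrib)
  finally have eq: "(\<Sum>j\<in>S. exp (s j) / Z * v j) - v x = (\<Sum>j\<in>S. exp (s j) / Z * (v j - v x))" .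
  have trm: "\<bar>exp (s j) / Z * (v j - v x)\<bar> \<le> exp (- \<beta>) * W" if j: "j \<in> S" for j
  proof (cases "j = x")
    case True then show ?thesis using W0 by simp
  next
    case False
    have "exp (s j) / Z \<le> exp (s j) / exp (s x)"
      using Zx Zp by (intro divide_left_mono) auto
    also have "\<dots> = exp (s j - s x)" by (simp add: exp_diff)
    also have "\<dots> \<le> exp (- \<beta>)" using sep[OF j False] by simp
    finally have al: "exp (s j) / Z \<le> exp (- \<beta>)" .
    have "\<bar>exp (s j) / Z * (v j - v x)\<bar> = exp (s j) / Z * \<bar>v j - v x\<bar>"
      using Zp by (simp add: abs_mult)
    also have "\<dots> \<le> exp (- \<beta>) * W"
      using al W[OF j] W0 Zp by (intro mult_mono) auto
    finally show ?thesis .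
  qed
  have "\<bar>(\<Sum>j\<in>S. exp (s j) / Z * (v j - v x))\<bar> \<le> (\<Sum>j\<in>S. \<bar>exp (s j) / Z * (v j - v x)\<bar>)"
    by (rule sum_abs)
  also have "\<dots> \<le> (\<Sum>j\<in>S. exp (- \<beta>) * W)" using trm by (intro sum_mono) auto
  also have "\<dots> = real (card S) * W * exp (- \<beta>)" by simp
  finally show ?thesis using eq small unfolding Z_def by linarith
qed

lemma mvec4: "mvec 4 A v a = (if a < 4 then A a 0 * v 0 + A a 1 * v 1 + A a 2 * v 2 + A a 3 * v 3 else 0)"
  unfolding mvec_def by (simp add: numeral_eq_Suc)



definition clip :: "nat \<Rightarrow> nat \<Rightarrow> nat" where "clip n t = (if t \<le> n then t else 0)"

definition embc :: "nat \<Rightarrow> nat \<Rightarrow> nat \<Rightarrow> strm" where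
  "embc n t i = (\<lambda>h a. if 1 \<le> i \<and> i \<le> n
      then (if a = 0 then real i else if a = 1 then real i ^ 2 else if a = 2 then real (clip n t) else 0)
      else (if a = 0 then real (clip n t) else if a = 3 then 1 else 0))"

definition Qc :: "real \<Rightarrow> mat" where
  "Qc b = (\<lambda>a c. if a = 0 \<and> c = 0 then 2 * b else if a = 1 \<and> c = 3 then - b else 0)"

definition Kc :: "real \<Rightarrow> mat" where
  "Kc G = (\<lambda>a c. if a = 0 \<and> c = 0 then 1 else if a = 1 \<and> c = 1 then 1 else if a = 1 \<and> c = 3 then G else 0)"

definition Vc :: mat where
  "Vc = (\<lambda>a c. if a = 0 \<and> c = 2 then 1 else 0)"

definition Pc :: "nat \<Rightarrow> real set" where
  "Pc n = real_of_int ` {- (2 * (int n + 1) ^ 2) .. 4 * (int n + 1) ^ 2}"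

definition Mc :: "nat \<Rightarrow> fullatt_model" where
  "Mc n = \<lparr>fa_emb = embc n, fa_Q = (\<lambda>l h. Qc (2 * (real n + 1) ^ 2)), fa_K = (\<lambda>l h. Kc (2 * real n ^ 2)),
           fa_V = (\<lambda>l h. Vc),
           fa_mlp = (\<lambda>l Y X h a. if h = 0 \<and> a = 0 \<and> Y 0 0 \<in> Pc n then Y 0 0 else 0),
           fa_out = (\<lambda>X. nat \<lfloor>X 0 0\<rfloor>)\<rparr>"

lemma inPc: "- (2 * (int n + 1) ^ 2) \<le> z \<Longrightarrow> z \<le> 4 * (int n + 1) ^ 2 \<Longrightarrow> real_of_int z \<in> Pc n"
  unfolding Pc_def by auto

lemma inPc_nat: "m \<le> (n + 1) ^ 2 \<Longrightarrow> real m \<in> Pc n"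
proof -
  assume m: "m \<le> (n + 1) ^ 2"
  have "int m \<le> int ((n + 1) ^ 2)" using m by linarith
  also have "\<dots> = (int n + 1) ^ 2" by simp
  also have "\<dots> \<le> 4 * (int n + 1) ^ 2" by simp
  finally have "real_of_int (int m) \<in> Pc n" by (intro inPc) auto
  then show ?thesis by simp
qed

lemma sum4: "(\<Sum>a<(4::nat). g a) = g 0 + g 1 + g 2 + (g 3 :: real)"
  by (simp add: numeral_eq_Suc)

lemma run_Mc:
  assumes n: "n \<ge> 1" and f: "is_fun n f" and x: "x \<in> {1..n}"
  shows "fa_run (Pc n) 1 1 4 (Mc n) (eva_tokens n f x) (n + 1) = f x"
proof -
  define toks where "toks = eva_tokens n f x"
  define X where "X = fa_stream (Pc n) 1 4 (Mc n) toks 0"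
  define xs where "xs = (\<lambda>j. X j 0)"
  define \<beta> where "\<beta> = 2 * (real n + 1) ^ 2"
  define G where "G = 2 * real n ^ 2"
  have fj: "1 \<le> f j \<and> f j \<le> n" if "1 \<le> j" "j \<le> n" for j using f that unfolding is_fun_def by auto
  have x1: "1 \<le> x" "x \<le> n" using x by auto
  have xs_d: "xs j = (\<lambda>a. if a = 0 then real j else if a = 1 then real j ^ 2 else if a = 2 then real (f j) else 0)"
    if "1 \<le> j" "j \<le> n" for j
    using that fj[OF that] unfolding xs_def X_def toks_def
    by (auto simp: smask_def embc_def eva_tokens_def clip_def Mc_def)
  have xs_q: "xs (n + 1) = (\<lambda>a. if a = 0 then real x else if a = 3 then 1 else 0)"
    using x1 unfolding xs_def X_def toks_def
    by (auto simp: smask_def embc_def eva_tokens_def clip_def Mc_def)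
  define q where "q = mvec 4 (Qc \<beta>) (xs (n + 1))"
  have q: "q = (\<lambda>a. if a = 0 then 2 * \<beta> * real x else if a = 1 then - \<beta> else 0)"
    unfolding q_def by (rule ext) (simp add: mvec4 Qc_def xs_q[simplified])
  define sc where "sc = (\<lambda>j. \<Sum>a<4. q a * mvec 4 (Kc G) (xs j) a)"
  define v where "v = (\<lambda>j. mvec 4 Vc (xs j) 0)"
  have sc_d: "sc j = \<beta> * (2 * real x * real j - real j ^ 2)" if "1 \<le> j" "j \<le> n" for j
    unfolding sc_def q using that by (simp add: sum4 mvec4 Kc_def xs_d algebra_simps)
  have sc_q: "sc (n + 1) = \<beta> * (2 * real x ^ 2 - G)"
    unfolding sc_def q by (simp add: sum4 mvec4 Kc_def xs_q[simplified] algebra_simps power2_eq_square)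
  have v_d: "v j = real (f j)" if "1 \<le> j" "j \<le> n" for j
    unfolding v_def using that by (simp add: mvec4 Vc_def xs_d)
  have v_q: "v (n + 1) = 0"
    unfolding v_def by (simp add: mvec4 Vc_def xs_q[simplified])
  have "(real n + 1) ^ 2 \<ge> 1" by (rule one_le_power) simp
  then have bpos: "\<beta> \<ge> 1" unfolding \<beta>_def by linarith
  have sep: "sc j \<le> sc x - \<beta>" if j: "j \<in> {1..n+1}" "j \<noteq> x" for j
  proof (cases "j \<le> n")
    case True
    have "1 \<le> \<bar>real x - real j\<bar>" using j(2) by (cases "x < j") auto
    then have "1 \<le> \<bar>real x - real j\<bar> ^ 2" by (rule one_le_power)
    then have d1: "1 \<le> (real x - real j) ^ 2" by simp
    have "sc x - sc j = \<beta> * (real x - real j) ^ 2"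
      using sc_d[of x] sc_d[of j] True j x1 by (simp add: power2_eq_square algebra_simps)
    moreover have "\<beta> * 1 \<le> \<beta> * (real x - real j) ^ 2" using d1 bpos by (intro mult_left_mono) auto
    ultimately show ?thesis by simp
  next
    case False
    then have jn: "j = n + 1" using j by auto
    have "real x ^ 2 \<le> real n ^ 2" using x1 by (simp add: power_mono)
    moreover have "1 \<le> real n ^ 2" using n by (simp add: one_le_power)
    ultimately have d1: "1 \<le> G - real x ^ 2" unfolding G_def by linarith
    have "sc x - sc j = \<beta> * (G - real x ^ 2)"
      using sc_d[of x] sc_q jn x1 by (simp add: power2_eq_square algebra_simps)
    moreover have "\<beta> * 1 \<le> \<beta> * (G - real x ^ 2)" using d1 bpos by (intro mult_left_mono) auto
    ultimately show ?thesis by simp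
  qed
  have Wb: "\<bar>v j - v x\<bar> \<le> real n" if j: "j \<in> {1..n+1}" for j
  proof (cases "j \<le> n")
    case True
    then show ?thesis using v_d[of j] v_d[of x] fj[of j] fj[of x] x1 j by auto
  next
    case False
    then have "j = n + 1" using j by auto
    then show ?thesis using v_q v_d[of x] fj[of x] x1 by auto
  qed
  have small: "real (card {1..n+1}) * real n * exp (- \<beta>) < 1/2"
  proof -
    have "1 + \<beta> \<le> exp \<beta>" by (rule exp_ge_add_one_self)
    moreover have "2 * ((real n + 1) * real n) < 1 + \<beta>" unfolding \<beta>_def by (simp add: power2_eq_square algebra_simps)
    ultimately have "2 * ((real n + 1) * real n) < exp \<beta>" by linarith
    then show ?thesis by (simp add: exp_minus field_simps)
  qed
  define t where "t = (\<Sum>j\<in>{1..n+1}. exp (sc j) / (\<Sum>i\<in>{1..n+1}. exp (sc i)) * v j)"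
  have close: "\<bar>t - v x\<bar> < 1/2" unfolding t_def
    by (rule softmax_pick[where S="{1..n+1}" and x=x and s=sc and v=v and W="real n" and \<beta>=\<beta>, OF _ _ sep Wb small])
       (use x1 in auto)
  have rt: "rnd (Pc n) t = real (f x)" unfolding Pc_def
  proof -
    have "rnd (real_of_int ` {- (2 * (int n + 1) ^ 2) .. 4 * (int n + 1) ^ 2}) t = real_of_int (int (f x))"
    proof (rule rnd_int)
      have "int (f x) \<le> int n" using fj[of x] x1 by simp
      also have "\<dots> \<le> 4 * (int n + 1) ^ 2" by (simp add: power2_eq_square algebra_simps)
      finally show "int (f x) \<in> {- (2 * (int n + 1) ^ 2) .. 4 * (int n + 1) ^ 2}" by simp
      show "\<bar>t - real_of_int (int (f x))\<bar> < 1/2" using close v_d[of x] x1 by simp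
    qed simp
    then show "rnd (real_of_int ` {- (2 * (int n + 1) ^ 2) .. 4 * (int n + 1) ^ 2}) t = real (f x)" by simp
  qed
  have head: "fa_head (Pc n) 4 (Qc \<beta>) (Kc G) Vc xs (n + 1) 0 = real (f x)"
    unfolding rt[symmetric] fa_head_def Let_def t_def sc_def v_def q_def[symmetric] by simp
  have "f x \<le> (n + 1) ^ 2" using fj[of x] x1 by (simp add: power2_eq_square)
  then have inP: "real (f x) \<in> Pc n" by (rule inPc_nat)
  have "fa_stream (Pc n) 1 4 (Mc n) toks (Suc 0) (n + 1) 0 0 = real (f x)"
    using head rt inP unfolding xs_def X_def \<beta>_def G_def by (simp add: Let_def smask_def Mc_def)
  then show ?thesis unfolding fa_run_def toks_def by (simp add: Mc_def)
qed

lemma card_Pc: "card (Pc n) \<le> 8 * (n + 1) ^ 2"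
proof -
  have "card (Pc n) = card {- (2 * (int n + 1) ^ 2) .. 4 * (int n + 1) ^ 2}"
    unfolding Pc_def by (rule card_image) (simp add: inj_on_def)
  also have "\<dots> = nat (6 * (int n + 1) ^ 2 + 1)" by simp
  also have "\<dots> \<le> 8 * (n + 1) ^ 2" by (simp add: nat_le_iff power2_eq_square algebra_simps)
  finally show ?thesis .
qed

lemma prec_Mc:
  assumes "card (Pc n) \<le> 2 ^ p"
  shows "fa_precision (Pc n) 1 1 4 p (Mc n)"
proof -
  have z: "0 \<in> Pc n" using inPc_nat[of 0 n] by simp
  have o: "1 \<in> Pc n" using inPc_nat[of 1 n] by simp
  have emb: "embc n t i h a \<in> Pc n" for t i h a
  proof -
    have c: "clip n t \<le> (n + 1) ^ 2" unfolding clip_def by (simp add: power2_eq_square)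
    have i1: "i \<le> (n + 1) ^ 2" if "i \<le> n" using that by (simp add: power2_eq_square)
    have i2: "i ^ 2 \<le> (n + 1) ^ 2" if "i \<le> n" using that by (simp add: power_mono)
    show ?thesis unfolding embc_def
      using z o inPc_nat[OF c] inPc_nat[OF i1] inPc_nat[OF i2] by auto
  qed
  have b1: "2 * (2 * (real n + 1) ^ 2) \<in> Pc n"
  proof -
    have "real_of_int (4 * (int n + 1) ^ 2) \<in> Pc n" by (rule inPc) auto
    then show ?thesis by simp
  qed
  have b2: "- (2 * (real n + 1) ^ 2) \<in> Pc n"
  proof -
    have "real_of_int (- (2 * (int n + 1) ^ 2)) \<in> Pc n" by (rule inPc) auto
    then show ?thesis by simp
  qed
  have g: "2 * real n ^ 2 \<in> Pc n"
  proof -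
    have e1: "(int n + 1) ^ 2 = int n * int n + 2 * int n + 1" by (simp add: power2_eq_square algebra_simps)
    have e2: "int n ^ 2 = int n * int n" by (simp add: power2_eq_square)
    have "0 \<le> int n * int n" by simp
    then have "real_of_int (2 * (int n) ^ 2) \<in> Pc n" using e1 e2 by (intro inPc) linarith+
    then show ?thesis by simp
  qed
  have fin: "finite (Pc n)" unfolding Pc_def by simp
  have Q: "Qc (2 * (real n + 1) ^ 2) a b \<in> Pc n" for a b
    unfolding Qc_def using z b1 b2 by simp
  have K: "Kc (2 * real n ^ 2) a b \<in> Pc n" for a b
    unfolding Kc_def using z o g by simp
  have V: "Vc a b \<in> Pc n" for a b
    unfolding Vc_def using z o by simp
  have ml: "fa_mlp (Mc n) l Y X h a \<in> Pc n" for l Y X h a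
    unfolding Mc_def using z by simp
  have ne: "Pc n \<noteq> {}" using z by blast
  show ?thesis unfolding fa_precision_def
    using assms fin ne emb Q K V ml z by (simp add: Mc_def)
qed



lemma upper: "\<exists>C k N. \<forall>n \<ge> N. \<exists>H d p P M.
            fa_solves n 1 H d p P M \<and> real (H * d * p) \<le> C * (log 2 (real n)) ^ k"
proof (rule exI[of _ "36::real"], rule exI[of _ "1::nat"], rule exI[of _ "2::nat"], intro allI impI)
  fix n :: nat assume n2: "n \<ge> 2"
  define q where "q = nat \<lceil>log 2 (real (n + 1))\<rceil>"
  have lg0: "log 2 (real (n + 1)) \<ge> 0" by simp
  have qeq: "real q = real_of_int \<lceil>log 2 (real (n + 1))\<rceil>" unfolding q_def using lg0 by simp
  have lq: "log 2 (real (n + 1)) \<le> real q" using qeq by linarith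
  have qu: "real q < log 2 (real (n + 1)) + 1" using qeq by linarith
  have "real (n + 1) = 2 powr (log 2 (real (n + 1)))" by simp
  also have "\<dots> \<le> 2 powr (real q)" using lq by (intro powr_mono) auto
  also have "\<dots> = real (2 ^ q)" by (simp add: powr_realpow)
  finally have "n + 1 \<le> 2 ^ q" by linarith
  then have "(n + 1) ^ 2 \<le> (2 ^ q) ^ 2" by (rule power_mono) simp
  then have "8 * (n + 1) ^ 2 \<le> 8 * (2::nat) ^ (2 * q)" by (simp add: power_mult[symmetric] mult.commute)
  also have "\<dots> = 2 ^ (2 * q + 3)" by (simp add: power_add)
  finally have cardP: "card (Pc n) \<le> 2 ^ (2 * q + 3)" using card_Pc[of n] by linarith
  have sol: "fa_solves n 1 1 4 (2 * q + 3) (Pc n) (Mc n)"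
    unfolding fa_solves_def using prec_Mc[OF cardP] run_Mc n2 by auto
  have l1: "log 2 (real n) \<ge> 1" using n2 by simp
  have "log 2 (real (n + 1)) \<le> log 2 (2 * real n)" using n2 by simp
  also have "\<dots> = 1 + log 2 (real n)" using n2 by (simp add: log_mult)
  finally have "real q < log 2 (real n) + 2" using qu by linarith
  then have "real (1 * 4 * (2 * q + 3)) \<le> 36 * (log 2 (real n)) ^ 1" using l1 by simp
  then show "\<exists>H d p P M. fa_solves n 1 H d p P M \<and> real (H * d * p) \<le> 36 * (log 2 (real n)) ^ 1"
    using sol by blast
qed


theorem theoremA5:
  shows "(\<exists>c > 0. \<forall>n L H d p.
            L \<ge> 1 \<and> H \<ge> 1 \<and> d \<ge> 1 \<and> p \<ge> 1 \<and> real (L * H * d\<^sup>2 * p) < c * real n \<longrightarrow>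
              (\<forall>M. \<not> ll_solves n L H d p M) \<and> (\<forall>M. \<not> ll_solves_cot n L H d p M))
       \<and> (\<exists>C k N. \<forall>n \<ge> N. \<exists>H d p P M.
            fa_solves n 1 H d p P M \<and> real (H * d * p) \<le> C * (log 2 (real n)) ^ k)"
proof (rule conjI)
  show "\<exists>c > 0. \<forall>n L H d p.
            L \<ge> 1 \<and> H \<ge> 1 \<and> d \<ge> 1 \<and> p \<ge> 1 \<and> real (L * H * d\<^sup>2 * p) < c * real n \<longrightarrow>
              (\<forall>M. \<not> ll_solves n L H d p M) \<and> (\<forall>M. \<not> ll_solves_cot n L H d p M)"
    by (rule exI[of _ "1/8"]) (use lower in auto)
  show "\<exists>C k N. \<forall>n \<ge> N. \<exists>H d p P M.
            fa_solves n 1 H d p P M \<and> real (H * d * p) \<le> C * (log 2 (real n)) ^ k"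
    by (rule upper)
qed

end
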